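(* Let $G=(V_G,E_G)$ and $H=(V_H,E_H)$ be two vertex-disjoint digraphs. Then: 1. $\mathrm{dpw}(G\oplus H)=\max\{\mathrm{dpw}(G),\mathrm{dpw}(H)\}$; 2. $\mathrm{dpw}(G\oslash H)=\max\{\mathrm{dpw}(G),\mathrm{dpw}(H)\}$; 3. for every directed union $G\ominus H$ of $G$ and $H$, $\mathrm{dpw}(G\ominus H)=\max\{\mathrm{dpw}(G),\mathrm{dpw}(H)\}$; 4. $\mathrm{dpw}(G\otimes H)=\min\{\mathrm{dpw}(G)+|V_H|,\ \mathrm{dpw}(H)+|V_G|\}$.
   Context: Digraphs are finite, without loops or multiple arcs; arcs are ordered pairs $(u,v)$ with $u\neq v$. A directed path-decomposition of a digraph $G=(V,E)$ is a sequence $(X_1,\ldots,X_r)$ of subsets of $V$ (bags) such that: (i) $X_1\cup\cdots\cup X_r=V$; (ii) for each $(u,v)\in E$ there are $i\le j$ with $u\in X_i$, $v\in X_j$; (iii) if $u\in X_i$ and $u\in X_j$ with $i\le j$, then $u\in X_\ell$ for all $i\le \ell\le j$. Its width is $\max_i |X_i|-1$, and the directed path-width $\mathrm{dpw}(G)$ is the minimum width of a directed path-decomposition of $G$. For vertex-disjoint digraphs $G=(V_G,E_G)$, $H=(V_H,E_H)$: the disjoint union $G\oplus H$ has vertex set $V_G\cup V_H$ and arc set $E_G\cup E_H$; the series composition $G\otimes H$ is $G\oplus H$ plus all arcs $(u,v)$ and $(v,u)$ with $u\in V_G$, $v\in V_H$; the order composition $G\oslash H$ is $G\oplus H$ plus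 all arcs $(u,v)$ with $u\in V_G$, $v\in V_H$; a directed union $G\ominus H$ is any digraph on $V_G\cup V_H$ obtained from $G\oplus H$ by adding some (possibly none or all) arcs $(u,v)$ with $u\in V_G$, $v\in V_H$ (so $G,H$ are induced subdigraphs and there is no arc from $V_H$ to $V_G$). *)

theory Defs
  imports Main
begin

definition digraph :: "'a set \<Rightarrow> ('a \<times> 'a) set \<Rightarrow> bool" where
  "digraph V E \<longleftrightarrow> finite V \<and> E \<subseteq> V \<times> V \<and> (\<forall>(u,v)\<in>E. u \<noteq> v)"

text \<open>Directed path-decomposition (X_1,...,X_r), r >= 1, as a nonempty list of bags
(list index i corresponds to bag X_(i+1)).\<close>

definition is_dpd :: "'a set \<Rightarrow> ('a \<times> 'a) set \<Rightarrow> 'a set list \<Rightarrow> bool" where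
  "is_dpd V E Xs \<longleftrightarrow>
     Xs \<noteq> [] \<and>
     \<Union> (set Xs) = V \<and>
     (\<forall>(u,v)\<in>E. \<exists>i j. i \<le> j \<and> j < length Xs \<and> u \<in> Xs ! i \<and> v \<in> Xs ! j) \<and>
     (\<forall>u i j l. i \<le> l \<and> l \<le> j \<and> j < length Xs \<and> u \<in> Xs ! i \<and> u \<in> Xs ! j
                \<longrightarrow> u \<in> Xs ! l)"

definition dpd_width :: "'a set list \<Rightarrow> int" where
  "dpd_width Xs = int (Max (card ` set Xs)) - 1"

definition dpw :: "'a set \<Rightarrow> ('a \<times> 'a) set \<Rightarrow> int" where
  "dpw V E = Min {dpd_width Xs | Xs. is_dpd V E Xs}"

text \<open>Operations on vertex-disjoint digraphs (arc sets; vertex set is always V_G \<union> V_H).\<close>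

definition disj_union_arcs :: "('a \<times> 'a) set \<Rightarrow> ('a \<times> 'a) set \<Rightarrow> ('a \<times> 'a) set" where
  "disj_union_arcs EG EH = EG \<union> EH"

definition series_arcs ::
  "'a set \<Rightarrow> ('a \<times> 'a) set \<Rightarrow> 'a set \<Rightarrow> ('a \<times> 'a) set \<Rightarrow> ('a \<times> 'a) set" where
  "series_arcs VG EG VH EH = EG \<union> EH \<union> (VG \<times> VH) \<union> (VH \<times> VG)"

definition order_arcs ::
  "'a set \<Rightarrow> ('a \<times> 'a) set \<Rightarrow> 'a set \<Rightarrow> ('a \<times> 'a) set \<Rightarrow> ('a \<times> 'a) set" where
  "order_arcs VG EG VH EH = EG \<union> EH \<union> (VG \<times> VH)"

definition directed_union_arcs ::
  "'a set \<Rightarrow> ('a \<times> 'a) set \<Rightarrow> 'a set \<Rightarrow> ('a \<times> 'a) set \<Rightarrow> ('a \<times> 'a) set set" where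
  "directed_union_arcs VG EG VH EH = {EG \<union> EH \<union> F | F. F \<subseteq> VG \<times> VH}"

end

theory Submission
  imports Defs
begin

declare upt_Suc[simp del]

lemma dpd_nth_sub: "is_dpd V E Xs \<Longrightarrow> i < length Xs \<Longrightarrow> Xs!i \<subseteq> V"
  unfolding is_dpd_def by (metis Sup_upper nth_mem)

lemma dpd_cover: "is_dpd V E Xs \<Longrightarrow> v \<in> V \<Longrightarrow> \<exists>i<length Xs. v \<in> Xs!i"
proof -
  assume D: "is_dpd V E Xs" and v: "v \<in> V"
  then have "v \<in> \<Union> (set Xs)" unfolding is_dpd_def by simp
  then obtain X where "X \<in> set Xs" "v \<in> X" by blast
  then show ?thesis by (metis in_set_conv_nth)
qed

lemma dpd_arc: "is_dpd V E Xs \<Longrightarrow> (x,y) \<in> E \<Longrightarrow> \<exists>i j. i \<le> j \<and> j < length Xs \<and> x \<in> Xs ! i \<and> y \<in> Xs ! j"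
  unfolding is_dpd_def by blast

lemma dpd_set_sub: "is_dpd V E Xs \<Longrightarrow> X \<in> set Xs \<Longrightarrow> X \<subseteq> V"
  unfolding is_dpd_def by blast

lemma width_ge: "X \<in> set Xs \<Longrightarrow> int (card X) - 1 \<le> dpd_width Xs"
proof -
  assume "X \<in> set Xs"
  then have "card X \<le> Max (card ` set Xs)" by (intro Max_ge) auto
  then show ?thesis unfolding dpd_width_def by linarith
qed

lemma width_attained: "Xs \<noteq> [] \<Longrightarrow> \<exists>X\<in>set Xs. dpd_width Xs = int (card X) - 1"
proof -
  assume "Xs \<noteq> []"
  then have "Max (card ` set Xs) \<in> card ` set Xs" by (intro Max_in) auto
  then show ?thesis unfolding dpd_width_def by auto
qed

lemma width_le: "Xs \<noteq> [] \<Longrightarrow> (\<And>X. X\<in>set Xs \<Longrightarrow> int (card X) - 1 \<le> w) \<Longrightarrow> dpd_width Xs \<le> w"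
  using width_attained by metis

lemma dpd_single: "E \<subseteq> V \<times> V \<Longrightarrow> is_dpd V E [V]"
  unfolding is_dpd_def by auto

lemma dpw_facts:
  assumes "finite V" "E \<subseteq> V \<times> V"
  shows "\<exists>Xs. is_dpd V E Xs \<and> dpw V E = dpd_width Xs"
    and "is_dpd V E Xs \<Longrightarrow> dpw V E \<le> dpd_width Xs"
proof -
  let ?W = "{dpd_width Xs | Xs. is_dpd V E Xs}"
  have sub: "?W \<subseteq> {-1..int (card V) - 1}"
  proof
    fix w assume "w \<in> ?W"
    then obtain Xs where D: "is_dpd V E Xs" and w: "w = dpd_width Xs" by blast
    have ne: "Xs \<noteq> []" using D unfolding is_dpd_def by auto
    then obtain X where X: "X \<in> set Xs" "w = int (card X) - 1" using width_attained w by metis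
    have "card X \<le> card V" using dpd_set_sub[OF D X(1)] assms(1) card_mono by blast
    then show "w \<in> {-1..int (card V) - 1}" using X by auto
  qed
  then have fin: "finite ?W" using finite_subset by blast
  have ne: "?W \<noteq> {}" using dpd_single[OF assms(2)] by blast
  have "dpw V E \<in> ?W" unfolding dpw_def using Min_in[OF fin ne] by simp
  then show "\<exists>Xs. is_dpd V E Xs \<and> dpw V E = dpd_width Xs" by auto
  show "is_dpd V E Xs \<Longrightarrow> dpw V E \<le> dpd_width Xs"
    unfolding dpw_def using fin by (intro Min_le) auto
qed

lemma window:
  assumes D: "is_dpd V E Xs" and st: "s \<le> t" "t < length Xs"
    and V': "V' \<subseteq> V" and E': "E' \<subseteq> E" "E' \<subseteq> V' \<times> V'"
    and hit: "\<forall>v\<in>V'. \<exists>i. s \<le> i \<and> i \<le> t \<and> v \<in> Xs!i"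
  shows "is_dpd V' E' (map (\<lambda>i. Xs!i \<inter> V') [s..<Suc t])"
proof -
  let ?Ys = "map (\<lambda>i. Xs!i \<inter> V') [s..<Suc t]"
  have nth: "\<And>k. k < Suc t - s \<Longrightarrow> ?Ys!k = Xs!(s+k) \<inter> V'" by (simp del: upt_Suc)
  have conv: "\<And>u i j l. i \<le> l \<Longrightarrow> l \<le> j \<Longrightarrow> j < length Xs \<Longrightarrow> u\<in>Xs!i \<Longrightarrow> u\<in>Xs!j \<Longrightarrow> u \<in> Xs!l"
    using D unfolding is_dpd_def by blast
  define c where "c x = min (max x s) t" for x
  have clip: "u \<in> Xs!(c i)" if "i < length Xs" "u \<in> Xs!i" "s \<le> i0" "i0 \<le> t" "u \<in> Xs!i0" for u i i0
  proof (cases "i \<le> i0")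
    case True
    then show ?thesis using conv[of i "c i" i0 u] that st unfolding c_def by auto
  next
    case False
    then show ?thesis using conv[of i0 "c i" i u] that st unfolding c_def by auto
  qed
  show ?thesis unfolding is_dpd_def
  proof (intro conjI)
    show "?Ys \<noteq> []" using st by simp
    have set: "set ?Ys = (\<lambda>i. Xs!i \<inter> V') ` {s..<Suc t}" by (simp del: upt_Suc)
    show "\<Union> (set ?Ys) = V'"
    proof
      show "\<Union> (set ?Ys) \<subseteq> V'" unfolding set by auto
      show "V' \<subseteq> \<Union> (set ?Ys)"
      proof
        fix v assume "v \<in> V'"
        then obtain i where "s \<le> i" "i \<le> t" "v \<in> Xs!i" using hit by blast
        then show "v \<in> \<Union> (set ?Ys)" unfolding set using \<open>v \<in> V'\<close> by auto
      qed
    qed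
    show "\<forall>(u,v)\<in>E'. \<exists>i j. i \<le> j \<and> j < length ?Ys \<and> u \<in> ?Ys ! i \<and> v \<in> ?Ys ! j"
    proof (intro ballI, clarify)
      fix u v assume uv: "(u,v) \<in> E'"
      then obtain i j where ij: "i \<le> j" "j < length Xs" "u \<in> Xs!i" "v \<in> Xs!j"
        using D E' unfolding is_dpd_def by blast
      have uv': "u \<in> V'" "v \<in> V'" using uv E' by auto
      obtain i0 where i0: "s \<le> i0" "i0 \<le> t" "u \<in> Xs!i0" using hit uv' by blast
      obtain j0 where j0: "s \<le> j0" "j0 \<le> t" "v \<in> Xs!j0" using hit uv' by blast
      have a: "u \<in> Xs!(c i)" using clip[of i u i0] ij i0 by auto
      have b: "v \<in> Xs!(c j)" using clip[of j v j0] ij j0 by auto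
      have cc: "s \<le> c i" "c i \<le> c j" "c j \<le> t" using ij st unfolding c_def by auto
      show "\<exists>i j. i \<le> j \<and> j < length ?Ys \<and> u \<in> ?Ys ! i \<and> v \<in> ?Ys ! j"
        apply (rule exI[of _ "c i - s"], rule exI[of _ "c j - s"])
        using a b cc nth[of "c i - s"] nth[of "c j - s"] uv' by auto
    qed
    show "\<forall>u i j l. i \<le> l \<and> l \<le> j \<and> j < length ?Ys \<and> u \<in> ?Ys ! i \<and> u \<in> ?Ys ! j \<longrightarrow> u \<in> ?Ys ! l"
    proof (intro allI impI)
      fix u i j l assume h: "i \<le> l \<and> l \<le> j \<and> j < length ?Ys \<and> u \<in> ?Ys ! i \<and> u \<in> ?Ys ! j"
      have jl: "j < Suc t - s" using h by (simp del: upt_Suc)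
      then have "?Ys!i = Xs!(s+i) \<inter> V'" "?Ys!j = Xs!(s+j) \<inter> V'" using nth[of i] nth[of j] h by simp_all
      then have "u \<in> Xs!(s+i)" "u \<in> Xs!(s+j)" "u \<in> V'" "j < Suc t - s" using h jl by auto
      then have "u \<in> Xs!(s+l)" using conv[of "s+i" "s+l" "s+j" u] h st by auto
      then show "u \<in> ?Ys ! l" using h nth[of l] \<open>u \<in> V'\<close> by auto
    qed
  qed
qed

lemma restrict_all:
  assumes D: "is_dpd V E Xs" and V': "V' \<subseteq> V" and E': "E' \<subseteq> E" "E' \<subseteq> V' \<times> V'"
  shows "is_dpd V' E' (map (\<lambda>i. Xs!i \<inter> V') [0..<Suc (length Xs - 1)])"
proof -
  have ne: "Xs \<noteq> []" using D unfolding is_dpd_def by auto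
  have hit: "\<forall>v\<in>V'. \<exists>i. 0 \<le> i \<and> i \<le> length Xs - 1 \<and> v \<in> Xs!i"
  proof
    fix v assume "v \<in> V'"
    then have "v \<in> \<Union> (set Xs)" using D V' unfolding is_dpd_def by auto
    then obtain i where "i < length Xs" "v \<in> Xs!i" by (auto simp: in_set_conv_nth)
    then show "\<exists>i. 0 \<le> i \<and> i \<le> length Xs - 1 \<and> v \<in> Xs!i" by (intro exI[of _ i]) auto
  qed
  have st: "0 \<le> length Xs - 1" "length Xs - 1 < length Xs" using ne by auto
  show ?thesis by (rule window[OF D st V' E' hit])
qed

lemma window_bound:
  assumes D: "is_dpd V E Zs" and fin: "finite V" and st: "s \<le> t" "t < length Zs"
    and VA: "VA \<subseteq> V" and VB: "VB \<subseteq> V" and disj: "VA \<inter> VB = {}"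
    and full: "\<And>i. s \<le> i \<Longrightarrow> i \<le> t \<Longrightarrow> VA \<subseteq> Zs!i"
    and hit: "\<forall>v\<in>VB. \<exists>i. s \<le> i \<and> i \<le> t \<and> v \<in> Zs!i"
    and EB: "EB \<subseteq> E" "digraph VB EB"
  shows "dpw VB EB + int (card VA) \<le> dpd_width Zs"
proof -
  let ?Ys = "map (\<lambda>i. Zs!i \<inter> VB) [s..<Suc t]"
  have EB': "EB \<subseteq> VB \<times> VB" "finite VB" using EB(2) unfolding digraph_def by auto
  have Y: "is_dpd VB EB ?Ys" using window[OF D st VB EB(1) EB'(1) hit] .
  have le: "dpw VB EB \<le> dpd_width ?Ys" using dpw_facts(2)[OF EB'(2) EB'(1) Y] .
  have "?Ys \<noteq> []" using st by simp
  then obtain Y where "Y \<in> set ?Ys" "dpd_width ?Ys = int (card Y) - 1" using width_attained by blast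
  then obtain i where i: "s \<le> i" "i \<le> t" "Y = Zs!i \<inter> VB" "dpd_width ?Ys = int (card Y) - 1" by auto
  have zi: "Zs!i \<subseteq> V" using dpd_nth_sub[OF D] i st by auto
  have fz: "finite (Zs!i)" using zi fin finite_subset by blast
  have "card Y + card VA = card (Y \<union> VA)"
    using i disj fz VA fin finite_subset by (subst card_Un_disjoint) auto
  also have "\<dots> \<le> card (Zs!i)" using i full[of i] fz by (intro card_mono) auto
  finally have "card Y + card VA \<le> card (Zs!i)" .
  moreover have "int (card (Zs!i)) - 1 \<le> dpd_width Zs" by (intro width_ge nth_mem) (use i st in auto)
  ultimately show ?thesis using le i by linarith
qed

lemma concat_dpd:
  assumes DG: "is_dpd VG EG Xs" and DH: "is_dpd VH EH Ys" and disj: "VG \<inter> VH = {}"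
    and E: "E \<subseteq> EG \<union> EH \<union> VG \<times> VH"
  shows "is_dpd (VG \<union> VH) E (Xs @ Ys)"
  unfolding is_dpd_def
proof (intro conjI)
  show "Xs @ Ys \<noteq> []" using DG unfolding is_dpd_def by auto
  show "\<Union> (set (Xs @ Ys)) = VG \<union> VH" using DG DH unfolding is_dpd_def by auto
  show "\<forall>(u,v)\<in>E. \<exists>i j. i \<le> j \<and> j < length (Xs@Ys) \<and> u \<in> (Xs@Ys) ! i \<and> v \<in> (Xs@Ys) ! j"
  proof (intro ballI, clarify)
    fix u v assume uv: "(u,v) \<in> E"
    consider "(u,v) \<in> EG" | "(u,v) \<in> EH" | "u \<in> VG" "v \<in> VH" using uv E by auto
    then show "\<exists>i j. i \<le> j \<and> j < length (Xs@Ys) \<and> u \<in> (Xs@Ys) ! i \<and> v \<in> (Xs@Ys) ! j"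
    proof cases
      case 1
      then obtain i j where "i \<le> j" "j < length Xs" "u \<in> Xs ! i" "v \<in> Xs ! j"
        using DG unfolding is_dpd_def by blast
      then show ?thesis by (intro exI[of _ i] exI[of _ j]) (auto simp: nth_append)
    next
      case 2
      then obtain i j where "i \<le> j" "j < length Ys" "u \<in> Ys ! i" "v \<in> Ys ! j"
        using DH unfolding is_dpd_def by blast
      then show ?thesis by (intro exI[of _ "length Xs + i"] exI[of _ "length Xs + j"]) (auto simp: nth_append)
    next
      case 3
      then obtain i j where "i < length Xs" "u \<in> Xs ! i" "j < length Ys" "v \<in> Ys ! j"
        using dpd_cover[OF DG] dpd_cover[OF DH] by meson
      then show ?thesis by (intro exI[of _ i] exI[of _ "length Xs + j"]) (auto simp: nth_append)
    qed
  qed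
  show "\<forall>u i j l. i \<le> l \<and> l \<le> j \<and> j < length (Xs@Ys) \<and> u \<in> (Xs@Ys) ! i \<and> u \<in> (Xs@Ys) ! j \<longrightarrow> u \<in> (Xs@Ys) ! l"
  proof (intro allI impI)
    fix u i j l assume h: "i \<le> l \<and> l \<le> j \<and> j < length (Xs@Ys) \<and> u \<in> (Xs@Ys) ! i \<and> u \<in> (Xs@Ys) ! j"
    have cG: "\<And>i j l. i \<le> l \<and> l \<le> j \<and> j < length Xs \<and> u \<in> Xs ! i \<and> u \<in> Xs ! j \<longrightarrow> u \<in> Xs ! l"
      using DG unfolding is_dpd_def by blast
    have cH: "\<And>i j l. i \<le> l \<and> l \<le> j \<and> j < length Ys \<and> u \<in> Ys ! i \<and> u \<in> Ys ! j \<longrightarrow> u \<in> Ys ! l"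
      using DH unfolding is_dpd_def by blast
    have sG: "\<And>k. k < length Xs \<Longrightarrow> Xs!k \<subseteq> VG" using dpd_nth_sub[OF DG] .
    have sH: "\<And>k. k < length Ys \<Longrightarrow> Ys!k \<subseteq> VH" using dpd_nth_sub[OF DH] .
    show "u \<in> (Xs@Ys) ! l"
    proof (cases "j < length Xs")
      case True
      then show ?thesis using h cG[of i l j] by (auto simp: nth_append)
    next
      case False
      have jj: "j - length Xs < length Ys" using h False by auto
      have "(Xs@Ys)!j = Ys!(j - length Xs)" using False by (simp add: nth_append)
      then have uH: "u \<in> VH" using h sH[OF jj] by auto
      have "\<not> i < length Xs"
      proof
        assume ii: "i < length Xs"
        then have "u \<in> Xs!i" using h by (simp add: nth_append)
        then show False using sG[OF ii] uH disj by blast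
      qed
      then show ?thesis using h False cH[of "i - length Xs" "l - length Xs" "j - length Xs"]
        by (auto simp: nth_append)
    qed
  qed
qed

lemma dir_union:
  assumes G: "digraph VG EG" and H: "digraph VH EH" and disj: "VG \<inter> VH = {}"
    and F: "F \<subseteq> VG \<times> VH"
  shows "dpw (VG \<union> VH) (EG \<union> EH \<union> F) = max (dpw VG EG) (dpw VH EH)"
proof -
  have fG: "finite VG" "EG \<subseteq> VG \<times> VG" using G unfolding digraph_def by auto
  have fH: "finite VH" "EH \<subseteq> VH \<times> VH" using H unfolding digraph_def by auto
  let ?E = "EG \<union> EH \<union> F"
  have fU: "finite (VG \<union> VH)" "?E \<subseteq> (VG \<union> VH) \<times> (VG \<union> VH)" using fG fH F by auto
  obtain XG where XG: "is_dpd VG EG XG" "dpw VG EG = dpd_width XG" using dpw_facts(1)[OF fG] by blast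
  obtain XH where XH: "is_dpd VH EH XH" "dpw VH EH = dpd_width XH" using dpw_facts(1)[OF fH] by blast
  have C: "is_dpd (VG \<union> VH) ?E (XG @ XH)" using F by (intro concat_dpd[OF XG(1) XH(1) disj]) auto
  have "dpd_width (XG @ XH) \<le> max (dpw VG EG) (dpw VH EH)"
  proof (rule width_le)
    show "XG @ XH \<noteq> []" using C unfolding is_dpd_def by auto
    fix X assume "X \<in> set (XG @ XH)"
    then show "int (card X) - 1 \<le> max (dpw VG EG) (dpw VH EH)"
      using width_ge[of X XG] width_ge[of X XH] XG XH by auto
  qed
  then have up: "dpw (VG \<union> VH) ?E \<le> max (dpw VG EG) (dpw VH EH)"
    using dpw_facts(2)[OF fU C] by linarith
  obtain Z where Z: "is_dpd (VG \<union> VH) ?E Z" "dpw (VG \<union> VH) ?E = dpd_width Z" using dpw_facts(1)[OF fU] by blast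
  have fz: "\<And>k. k < length Z \<Longrightarrow> finite (Z!k)" using dpd_nth_sub[OF Z(1)] fU(1) finite_subset by blast
  have lo: "dpw V' E' \<le> dpd_width Z" if "V' \<subseteq> VG \<union> VH" "E' \<subseteq> ?E" "E' \<subseteq> V' \<times> V'" "finite V'" for V' E'
  proof -
    let ?Y = "map (\<lambda>i. Z!i \<inter> V') [0..<Suc (length Z - 1)]"
    have Y: "is_dpd V' E' ?Y" using restrict_all[OF Z(1) that(1-3)] .
    have "dpd_width ?Y \<le> dpd_width Z"
    proof (rule width_le)
      show "?Y \<noteq> []" by simp
      fix X assume "X \<in> set ?Y"
      have Zne: "Z \<noteq> []" using Z(1) unfolding is_dpd_def by blast
      obtain k where k0: "k < Suc (length Z - 1)" "X = Z!k \<inter> V'" using \<open>X \<in> set ?Y\<close> by auto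
      then have k: "k < length Z" "X = Z!k \<inter> V'" using Zne by auto
      then have "card X \<le> card (Z!k)" using fz by (simp add: card_mono)
      moreover have "int (card (Z!k)) - 1 \<le> dpd_width Z" by (intro width_ge nth_mem) (use k in auto)
      ultimately show "int (card X) - 1 \<le> dpd_width Z" by linarith
    qed
    then show ?thesis using dpw_facts(2)[OF that(4) that(3) Y] by linarith
  qed
  have "dpw VG EG \<le> dpd_width Z" using lo[of VG EG] fG by auto
  moreover have "dpw VH EH \<le> dpd_width Z" using lo[of VH EH] fH by auto
  ultimately show ?thesis using up Z(2) by linarith
qed

lemma series_upper:
  assumes G: "digraph VG EG" and H: "digraph VH EH" and disj: "VG \<inter> VH = {}"
  shows "dpw (VG \<union> VH) (series_arcs VG EG VH EH) \<le> dpw VG EG + int (card VH)"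
proof -
  have fG: "finite VG" "EG \<subseteq> VG \<times> VG" using G unfolding digraph_def by auto
  have fH: "finite VH" "EH \<subseteq> VH \<times> VH" using H unfolding digraph_def by auto
  let ?E = "series_arcs VG EG VH EH"
  have fU: "finite (VG \<union> VH)" "?E \<subseteq> (VG \<union> VH) \<times> (VG \<union> VH)" using fG fH unfolding series_arcs_def by auto
  obtain XG where XG: "is_dpd VG EG XG" "dpw VG EG = dpd_width XG" using dpw_facts(1)[OF fG] by blast
  let ?Y = "map (\<lambda>X. X \<union> VH) XG"
  have ne: "XG \<noteq> []" using XG unfolding is_dpd_def by auto
  have sG: "\<And>k. k < length XG \<Longrightarrow> XG!k \<subseteq> VG" using dpd_nth_sub[OF XG(1)] .
  have Y: "is_dpd (VG \<union> VH) ?E ?Y" unfolding is_dpd_def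
  proof (intro conjI)
    show "?Y \<noteq> []" using ne by simp
    show "\<Union> (set ?Y) = VG \<union> VH" using XG(1) ne unfolding is_dpd_def by auto
    show "\<forall>(u,v)\<in>?E. \<exists>i j. i \<le> j \<and> j < length ?Y \<and> u \<in> ?Y ! i \<and> v \<in> ?Y ! j"
    proof (intro ballI, clarify)
      fix u v assume uv: "(u,v) \<in> ?E"
      have cov: "\<And>w. w \<in> VG \<Longrightarrow> \<exists>i<length XG. w \<in> XG!i"
        using dpd_cover[OF XG(1)] by blast
      consider "(u,v) \<in> EG" | "u \<in> VH" "v \<in> VH" | "u \<in> VG" "v \<in> VH" | "u \<in> VH" "v \<in> VG"
        using uv fH unfolding series_arcs_def by auto
      then show "\<exists>i j. i \<le> j \<and> j < length ?Y \<and> u \<in> ?Y ! i \<and> v \<in> ?Y ! j"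
      proof cases
        case 1
        then obtain i j where "i \<le> j" "j < length XG" "u \<in> XG ! i" "v \<in> XG ! j"
          using XG(1) unfolding is_dpd_def by blast
        then show ?thesis by (intro exI[of _ i] exI[of _ j]) auto
      next
        case 2 then show ?thesis using ne by (intro exI[of _ 0] exI[of _ 0]) auto
      next
        case 3 then obtain i where "i < length XG" "u \<in> XG!i" using cov by blast
        then show ?thesis using 3 by (intro exI[of _ i] exI[of _ i]) auto
      next
        case 4 then obtain i where "i < length XG" "v \<in> XG!i" using cov by blast
        then show ?thesis using 4 by (intro exI[of _ i] exI[of _ i]) auto
      qed
    qed
    show "\<forall>u i j l. i \<le> l \<and> l \<le> j \<and> j < length ?Y \<and> u \<in> ?Y ! i \<and> u \<in> ?Y ! j \<longrightarrow> u \<in> ?Y ! l"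
    proof (intro allI impI)
      fix u i j l assume h: "i \<le> l \<and> l \<le> j \<and> j < length ?Y \<and> u \<in> ?Y ! i \<and> u \<in> ?Y ! j"
      have cG: "i \<le> l \<and> l \<le> j \<and> j < length XG \<and> u \<in> XG ! i \<and> u \<in> XG ! j \<longrightarrow> u \<in> XG ! l"
        using XG(1) unfolding is_dpd_def by blast
      show "u \<in> ?Y ! l"
      proof (cases "u \<in> VH")
        case True then show ?thesis using h by auto
      next
        case False then show ?thesis using h cG by auto
      qed
    qed
  qed
  have "dpd_width ?Y \<le> dpd_width XG + int (card VH)"
  proof (rule width_le)
    show "?Y \<noteq> []" using ne by simp
    fix X assume "X \<in> set ?Y"
    then obtain X0 where X0: "X0 \<in> set XG" "X = X0 \<union> VH" by auto
    have "card X \<le> card X0 + card VH" using X0 card_Un_le by auto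
    then show "int (card X) - 1 \<le> dpd_width XG + int (card VH)" using width_ge[OF X0(1)] by linarith
  qed
  then show ?thesis using dpw_facts(2)[OF fU Y] XG(2) by linarith
qed

lemma series_lower:
  assumes G: "digraph VG EG" and H: "digraph VH EH" and disj: "VG \<inter> VH = {}"
    and Z: "is_dpd (VG \<union> VH) (series_arcs VG EG VH EH) Zs"
  shows "min (dpw VG EG + int (card VH)) (dpw VH EH + int (card VG)) \<le> dpd_width Zs"
proof -
  have fG: "finite VG" using G unfolding digraph_def by auto
  have fH: "finite VH" using H unfolding digraph_def by auto
  let ?V = "VG \<union> VH"
  let ?E = "series_arcs VG EG VH EH"
  have fin: "finite ?V" using fG fH by auto
  have EGs: "EG \<subseteq> ?E" "EH \<subseteq> ?E" unfolding series_arcs_def by auto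
  have ne: "Zs \<noteq> []" using Z unfolding is_dpd_def by auto
  have conv: "\<And>u i j l. i \<le> l \<Longrightarrow> l \<le> j \<Longrightarrow> j < length Zs \<Longrightarrow> u\<in>Zs!i \<Longrightarrow> u\<in>Zs!j \<Longrightarrow> u \<in> Zs!l"
    using Z unfolding is_dpd_def by blast
  have cov: "\<And>w. w \<in> ?V \<Longrightarrow> \<exists>i<length Zs. w \<in> Zs!i"
    using dpd_cover[OF Z] by blast
  have arcZ: "\<And>x y. (x,y) \<in> ?E \<Longrightarrow> \<exists>i j. i \<le> j \<and> j < length Zs \<and> x \<in> Zs ! i \<and> y \<in> Zs ! j"
    using dpd_arc[OF Z] by blast
  show ?thesis
  proof (cases "VH = {}")
    case True
    have "dpw VG EG + int (card VH) \<le> dpd_width Zs"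
    proof (rule window_bound[OF Z fin, of 0 "length Zs - 1"])
      show "\<forall>v\<in>VG. \<exists>i. 0 \<le> i \<and> i \<le> length Zs - 1 \<and> v \<in> Zs!i"
      proof
        fix v assume "v \<in> VG"
        then obtain i where "i < length Zs" "v \<in> Zs!i" using cov by blast
        then show "\<exists>i. 0 \<le> i \<and> i \<le> length Zs - 1 \<and> v \<in> Zs!i" by (intro exI[of _ i]) auto
      qed
    qed (use ne True disj EGs G in auto)
    then show ?thesis by linarith
  next
    case False
    define P where "P v = {i. i < length Zs \<and> v \<in> Zs!i}" for v
    define f where "f v = Min (P v)" for v
    define l where "l v = Max (P v)" for v
    have Pfin: "finite (P v)" for v unfolding P_def by auto
    have Pne: "v \<in> ?V \<Longrightarrow> P v \<noteq> {}" for v using cov unfolding P_def by auto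
    have F1: "v \<in> ?V \<Longrightarrow> f v \<le> l v \<and> l v < length Zs" for v
    proof -
      assume a: "v \<in> ?V"
      have "f v \<in> P v" "l v \<in> P v" using Min_in[OF Pfin Pne[OF a]] Max_in[OF Pfin Pne[OF a]]
        unfolding f_def l_def by auto
      moreover then have "f v \<le> l v" unfolding f_def using Min_le[OF Pfin] by blast
      ultimately show ?thesis unfolding P_def by auto
    qed
    have F2: "v \<in> ?V \<Longrightarrow> f v \<le> i \<Longrightarrow> i \<le> l v \<Longrightarrow> v \<in> Zs!i" for v i
    proof -
      assume a: "v \<in> ?V" "f v \<le> i" "i \<le> l v"
      have "f v \<in> P v" "l v \<in> P v" using Min_in[OF Pfin Pne[OF a(1)]] Max_in[OF Pfin Pne[OF a(1)]]
        unfolding f_def l_def by auto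
      then show ?thesis using conv[of "f v" i "l v" v] a unfolding P_def by auto
    qed
    have F3: "u \<in> VG \<Longrightarrow> v \<in> VH \<Longrightarrow> f u \<le> l v \<and> f v \<le> l u" for u v
    proof -
      assume a: "u \<in> VG" "v \<in> VH"
      have arcs: "(u,v) \<in> ?E" "(v,u) \<in> ?E" using a unfolding series_arcs_def by blast+
      have g: "f x \<le> l y" if xy: "(x,y) \<in> ?E" for x y
      proof -
        obtain i j where "i \<le> j" "j < length Zs" "x \<in> Zs ! i" "y \<in> Zs ! j"
          using arcZ[OF xy] by blast
        then have "i \<in> P x" "j \<in> P y" unfolding P_def by auto
        then have "f x \<le> i" "j \<le> l y" unfolding f_def l_def using Min_le[OF Pfin] Max_ge[OF Pfin] by blast+
        then show ?thesis using \<open>i \<le> j\<close> by linarith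
      qed
      show ?thesis using g[OF arcs(1)] g[OF arcs(2)] by (rule conjI)
    qed
    define L where "L = Max (f ` VH)"
    define R where "R = Min (l ` VH)"
    have "L \<in> f ` VH" "R \<in> l ` VH" unfolding L_def R_def using False fH by auto
    then obtain v1 v0 where v1: "v1 \<in> VH" "L = f v1" and v0: "v0 \<in> VH" "R = l v0" by auto
    have fL: "v \<in> VH \<Longrightarrow> f v \<le> L" for v unfolding L_def using fH by auto
    have lR: "v \<in> VH \<Longrightarrow> R \<le> l v" for v unfolding R_def using fH by auto
    show ?thesis
    proof (cases "L \<le> R")
      case True
      have "dpw VG EG + int (card VH) \<le> dpd_width Zs"
      proof (rule window_bound[OF Z fin True])
        show "R < length Zs" using F1[of v0] v0 by auto
        show "\<And>i. L \<le> i \<Longrightarrow> i \<le> R \<Longrightarrow> VH \<subseteq> Zs ! i"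
          using F2 fL lR by (meson UnI2 order_trans subsetI)
        show "\<forall>v\<in>VG. \<exists>i. L \<le> i \<and> i \<le> R \<and> v \<in> Zs ! i"
        proof
          fix u assume u: "u \<in> VG"
          have "f u \<le> R" "L \<le> l u" "f u \<le> l u" using F3[OF u v0(1)] F3[OF u v1(1)] F1[of u] u v0 v1 by auto
          then show "\<exists>i. L \<le> i \<and> i \<le> R \<and> u \<in> Zs ! i" using True F2[of u "max (f u) L"] u
            by (intro exI[of _ "max (f u) L"]) auto
        qed
      qed (use disj EGs G in auto)
      then show ?thesis by linarith
    next
      case False
      then have RL: "R \<le> L" by auto
      have "dpw VH EH + int (card VG) \<le> dpd_width Zs"
      proof (rule window_bound[OF Z fin RL])
        show "L < length Zs" using F1[of v1] v1 by auto
        show "\<And>i. R \<le> i \<Longrightarrow> i \<le> L \<Longrightarrow> VG \<subseteq> Zs ! i"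
        proof
          fix i u assume i: "R \<le> i" "i \<le> L" and u: "u \<in> VG"
          have "f u \<le> R" "L \<le> l u" using F3[OF u v0(1)] F3[OF u v1(1)] v0 v1 by auto
          then show "u \<in> Zs ! i" using F2[of u i] i u by auto
        qed
        show "\<forall>v\<in>VH. \<exists>i. R \<le> i \<and> i \<le> L \<and> v \<in> Zs ! i"
        proof
          fix v assume v: "v \<in> VH"
          have "f v \<le> L" "R \<le> l v" "f v \<le> l v" using fL[OF v] lR[OF v] F1[of v] v by auto
          then show "\<exists>i. R \<le> i \<and> i \<le> L \<and> v \<in> Zs ! i" using RL F2[of v "max (f v) R"] v
            by (intro exI[of _ "max (f v) R"]) auto
        qed
      qed (use disj EGs H in auto)
      then show ?thesis by linarith
    qed
  qed
qed

theorem theorem3p8: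
  fixes VG VH :: "'a set" and EG EH :: "('a \<times> 'a) set"
  assumes "digraph VG EG" and "digraph VH EH" and "VG \<inter> VH = {}"
  shows "dpw (VG \<union> VH) (disj_union_arcs EG EH) = max (dpw VG EG) (dpw VH EH)
    \<and> dpw (VG \<union> VH) (order_arcs VG EG VH EH) = max (dpw VG EG) (dpw VH EH)
    \<and> (\<forall>E \<in> directed_union_arcs VG EG VH EH.
           dpw (VG \<union> VH) E = max (dpw VG EG) (dpw VH EH))
    \<and> dpw (VG \<union> VH) (series_arcs VG EG VH EH)
           = min (dpw VG EG + int (card VH)) (dpw VH EH + int (card VG))"
proof (intro conjI)
  show "dpw (VG \<union> VH) (disj_union_arcs EG EH) = max (dpw VG EG) (dpw VH EH)"
    using dir_union[OF assms, of "{}"] unfolding disj_union_arcs_def by simp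
  show "dpw (VG \<union> VH) (order_arcs VG EG VH EH) = max (dpw VG EG) (dpw VH EH)"
    using dir_union[OF assms, of "VG \<times> VH"] unfolding order_arcs_def by simp
  show "\<forall>E \<in> directed_union_arcs VG EG VH EH. dpw (VG \<union> VH) E = max (dpw VG EG) (dpw VH EH)"
    using dir_union[OF assms] unfolding directed_union_arcs_def by auto
  have fG: "finite VG" "EG \<subseteq> VG \<times> VG" using assms(1) unfolding digraph_def by auto
  have fH: "finite VH" "EH \<subseteq> VH \<times> VH" using assms(2) unfolding digraph_def by auto
  have fU: "finite (VG \<union> VH)" "series_arcs VG EG VH EH \<subseteq> (VG \<union> VH) \<times> (VG \<union> VH)"
    using fG fH unfolding series_arcs_def by auto
  obtain Z where Z: "is_dpd (VG \<union> VH) (series_arcs VG EG VH EH) Z"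
      "dpw (VG \<union> VH) (series_arcs VG EG VH EH) = dpd_width Z" using dpw_facts(1)[OF fU] by blast
  have u1: "dpw (VG \<union> VH) (series_arcs VG EG VH EH) \<le> dpw VG EG + int (card VH)"
    using series_upper[OF assms] .
  have sym: "series_arcs VG EG VH EH = series_arcs VH EH VG EG" "VG \<union> VH = VH \<union> VG"
    unfolding series_arcs_def by auto
  have u2: "dpw (VG \<union> VH) (series_arcs VG EG VH EH) \<le> dpw VH EH + int (card VG)"
    using series_upper[OF assms(2,1)] assms(3) sym by (simp add: Int_commute)
  have "min (dpw VG EG + int (card VH)) (dpw VH EH + int (card VG)) \<le> dpd_width Z"
    using series_lower[OF assms Z(1)] .
  then show "dpw (VG \<union> VH) (series_arcs VG EG VH EH)
           = min (dpw VG EG + int (card VH)) (dpw VH EH + int (card VG))"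
    using u1 u2 Z(2) by linarith
qed

end
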